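(* Let $A\in\mathbb{C}^{n\times n}$ and let $X\in\mathbb{C}^{n\times n}$ be a matrix whose $j$-th column $x^{(j)}$ is an eigenvector of $A$ with $\|x^{(j)}\|_2=1$, for $j=1,\dots,n$. Suppose there is $k>0$ with $|X_{ij}|\le k/n^2$ for all $i\ne j$, and $n^3-3kn^2-3k^2>0$. Then $X$ is invertible and $$\kappa(X)=\|X\|_2\|X^{-1}\|_2\le\frac{n^3+3kn^2+k^2}{n^3-3kn^2-3k^2}.$$
   Context: $\kappa(X)=\|X\|_2\|X^{-1}\|_2$ is the spectral condition number. The hypothesis $|X_{ij}|\le k/n^2$ ($i\ne j$) is the situation produced by a matrix whose diagonal entries are pairwise separated by at least a constant times $n^2$ and whose off-diagonal row sums are bounded by a constant, with $x^{(j)}$ the unit eigenvector for the eigenvalue in the $j$-th Gershgorin disc. *)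

theory Defs
  imports "HOL-Analysis.Analysis"
begin

text \<open>Spectral (operator 2-) norm of a square complex matrix: the operator norm of
  the induced map on complex^'n, whose norm is the Euclidean 2-norm.\<close>
definition spec_norm :: "complex^'n^'n \<Rightarrow> real" where
  "spec_norm M = onorm (\<lambda>x. M *v x)"

definition cond_num :: "complex^'n^'n \<Rightarrow> real" where
  "cond_num M = spec_norm M * spec_norm (matrix_inv M)"

end

theory Submission
  imports Defs
begin

lemma norm_vec_L2: "norm (v::complex^'n) = L2_set (\<lambda>i. cmod (v$i)) UNIV"
  by (simp add: norm_vec_def)

lemma l1_le: "(\<Sum>j\<in>UNIV. cmod ((v::complex^'n)$j)) \<le> sqrt (real CARD('n)) * norm v"
proof -
  have "(\<Sum>j\<in>UNIV. cmod (v$j)) = (\<Sum>j\<in>UNIV. \<bar>cmod (v$j)\<bar> * \<bar>(\<lambda>_::'n. 1::real) j\<bar>)" by simp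
  also have "\<dots> \<le> L2_set (\<lambda>j. cmod (v$j)) UNIV * L2_set (\<lambda>_::'n. 1::real) UNIV"
    using L2_set_mult_ineq[of "\<lambda>j. cmod (v$j)" "\<lambda>_::'n. 1::real" UNIV] by simp
  also have "\<dots> = norm v * sqrt (real CARD('n))"
    by (simp add: norm_vec_L2 L2_set_constant)
  finally show ?thesis by (simp add: mult.commute)
qed

lemma offdiag_bound:
  fixes E :: "complex^'n^'n"
  assumes b: "\<And>i j. cmod (E$i$j) \<le> b"
  shows "norm (E *v v) \<le> b * real CARD('n) * norm v"
proof -
  define S where "S = (\<Sum>j\<in>UNIV. cmod (v$j))"
  have b0: "0 \<le> b" using b[of undefined undefined] norm_ge_zero order_trans by blast
  have comp: "cmod ((E *v v)$i) \<le> b * S" for i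
  proof -
    have "cmod ((E *v v)$i) = cmod (\<Sum>j\<in>UNIV. E$i$j * v$j)"
      by (simp add: matrix_vector_mult_def)
    also have "\<dots> \<le> (\<Sum>j\<in>UNIV. cmod (E$i$j * v$j))" by (rule norm_sum)
    also have "\<dots> \<le> (\<Sum>j\<in>UNIV. b * cmod (v$j))"
      by (rule sum_mono) (simp add: norm_mult b mult_right_mono)
    finally show ?thesis by (simp add: S_def sum_distrib_left)
  qed
  have "norm (E *v v) \<le> L2_set (\<lambda>i::'n. b * S) UNIV"
    unfolding norm_vec_L2 by (intro L2_set_mono comp) auto
  also have "\<dots> = sqrt (real CARD('n)) * (b * S)"
    using b0 by (simp add: L2_set_constant S_def sum_nonneg)
  also have "\<dots> \<le> sqrt (real CARD('n)) * (b * (sqrt (real CARD('n)) * norm v))"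
    using l1_le[of v] b0 by (simp add: S_def mult_left_mono)
  also have "\<dots> = b * real CARD('n) * norm v"
    by (simp add: algebra_simps)
  finally show ?thesis .
qed

lemma diag_bounds:
  fixes d v :: "complex^'n"
  assumes m0: "0 \<le> m" and dl: "\<And>i. m \<le> cmod (d$i)" and du: "\<And>i. cmod (d$i) \<le> 1"
  shows "m * norm v \<le> norm (\<chi> i. d$i * v$i)" "norm (\<chi> i. d$i * v$i) \<le> norm v"
proof -
  have "m * norm v = L2_set (\<lambda>i. m * cmod (v$i)) UNIV"
    unfolding norm_vec_L2 by (rule L2_set_right_distrib[OF m0])
  also have "\<dots> \<le> L2_set (\<lambda>i. cmod ((\<chi> i. d$i * v$i)$i)) UNIV"
    by (rule L2_set_mono) (auto simp: norm_mult intro!: mult_right_mono dl m0 mult_nonneg_nonneg)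
  finally show "m * norm v \<le> norm (\<chi> i. d$i * v$i)" by (simp add: norm_vec_L2)
  have "L2_set (\<lambda>i. cmod ((\<chi> i. d$i * v$i)$i)) UNIV \<le> L2_set (\<lambda>i. cmod (v$i)) UNIV"
    by (rule L2_set_mono) (auto simp: norm_mult intro!: mult_left_le_one_le du)
  then show "norm (\<chi> i. d$i * v$i) \<le> norm v" by (simp add: norm_vec_L2)
qed

theorem theorem3:
  fixes A X :: "complex^'n^'n" and k :: real
  assumes eigvec: "\<And>j. \<exists>c::complex. A *v column j X = c *s column j X"
    and unit: "\<And>j. norm (column j X) = 1"
    and kpos: "k > 0"
    and offdiag: "\<And>i j. i \<noteq> j \<Longrightarrow> cmod (X $ i $ j) \<le> k / (real CARD('n))^2"
    and cond: "(real CARD('n))^3 - 3 * k * (real CARD('n))^2 - 3 * k^2 > 0"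
  shows "invertible X \<and>
    cond_num X \<le> ((real CARD('n))^3 + 3 * k * (real CARD('n))^2 + k^2)
                   / ((real CARD('n))^3 - 3 * k * (real CARD('n))^2 - 3 * k^2)"
proof -
  define N where "N = real CARD('n)"
  have N1: "N \<ge> 1" unfolding N_def by (simp add: Suc_leI)
  have cond': "N^3 - 3*k*N^2 - 3*k^2 > 0" using cond by (simp add: N_def)
  define m where "m = 1 - k^2 / N^3"
  define d :: "complex^'n" where "d = (\<chi> i. X$i$i)"
  define E :: "complex^'n^'n" where "E = (\<chi> i j. if i = j then 0 else X$i$j)"
  have Eb: "cmod (E$i$j) \<le> k / N^2" for i j
    using offdiag[of i j] kpos by (auto simp: E_def N_def)
  have split: "X *v v = (\<chi> i. d$i * v$i) + E *v v" for v
  proof -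
    have "(X *v v)$i = d$i * v$i + (E *v v)$i" for i
    proof -
      have "(\<Sum>j\<in>UNIV. X$i$j * v$j) = (\<Sum>j\<in>UNIV. (if i = j then X$i$j * v$j else 0) + E$i$j * v$j)"
        by (rule sum.cong) (auto simp: E_def)
      also have "\<dots> = d$i * v$i + (\<Sum>j\<in>UNIV. E$i$j * v$j)"
        by (simp add: sum.distrib d_def)
      finally show ?thesis by (simp add: matrix_vector_mult_def)
    qed
    then show ?thesis by (simp add: vec_eq_iff)
  qed
  have Ebound: "norm (E *v v) \<le> (k / N) * norm v" for v
  proof -
    have "norm (E *v v) \<le> k / N^2 * N * norm v"
      using offdiag_bound[of E "k / N^2" v] Eb by (simp add: N_def)
    also have "k / N^2 * N = k / N" using N1 by (simp add: power2_eq_square)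
    finally show ?thesis .
  qed
  have kN: "k*N^2 > 0" using kpos N1 by simp
  have kk: "k^2 > 0" using kpos by simp
  have k2: "k^2 < N^3" using cond' kN kk by linarith
  have m0: "0 \<le> m" and m1: "m \<le> 1" using k2 N1 by (auto simp: m_def)
  have dsq: "m \<le> (cmod (d$j))^2" and du: "cmod (d$j) \<le> 1" for j
  proof -
    have nc: "norm (column j X) = L2_set (\<lambda>i. cmod (X$i$j)) UNIV"
      by (simp add: norm_vec_L2 column_def)
    have one: "(\<Sum>i\<in>UNIV. (cmod (X$i$j))^2) = 1"
      using unit[of j] unfolding nc L2_set_def by simp
    have rest: "(\<Sum>i\<in>UNIV-{j}. (cmod (X$i$j))^2) \<le> (\<Sum>i\<in>UNIV-{j}. (k/N^2)^2)"
      by (rule sum_mono) (use offdiag kpos in \<open>auto simp: N_def intro!: power_mono\<close>)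
    have "(\<Sum>i\<in>UNIV-{j}. (k/N^2)^2) = (N - 1) * (k/N^2)^2"
      by (simp add: N_def card_Diff_singleton of_nat_diff)
    also have "\<dots> \<le> N * (k/N^2)^2" by (simp add: mult_right_mono)
    also have "\<dots> = k^2 / N^3" using N1 by (simp add: power2_eq_square power3_eq_cube field_simps)
    finally have rest': "(\<Sum>i\<in>UNIV-{j}. (cmod (X$i$j))^2) \<le> k^2 / N^3" using rest by linarith
    have sp: "(\<Sum>i\<in>UNIV. (cmod (X$i$j))^2) = (cmod (X$j$j))^2 + (\<Sum>i\<in>UNIV-{j}. (cmod (X$i$j))^2)"
      by (simp add: sum.remove)
    show "m \<le> (cmod (d$j))^2" using one sp rest' by (simp add: m_def d_def)
    have "(cmod (d$j))^2 \<le> 1" using one sp sum_nonneg[of "UNIV-{j}" "\<lambda>i. (cmod (X$i$j))^2"]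
      by (simp add: d_def)
    then show "cmod (d$j) \<le> 1" by (simp add: power_le_one_iff abs_le_square_iff)
  qed
  have dl: "m \<le> cmod (d$j)" for j
  proof -
    have "m^2 \<le> m" using m0 m1 by (simp add: power2_eq_square mult_left_le_one_le)
    then have "m^2 \<le> (cmod (d$j))^2" using dsq[of j] by linarith
    then show ?thesis using m0 by (simp add: power2_le_iff_abs_le abs_le_square_iff)
  qed
  define c where "c = m - k / N"
  have cpos: "c > 0"
  proof -
    have "c = (N^3 - k^2 - k*N^2) / N^3" using N1 by (simp add: c_def m_def field_simps power2_eq_square power3_eq_cube)
    moreover have "N^3 - k^2 - k*N^2 > 0" using cond' kN kk by linarith
    ultimately show ?thesis using N1 by simp
  qed
  have lower: "c * norm v \<le> norm (X *v v)" for v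
  proof -
    have "m * norm v \<le> norm (\<chi> i. d$i * v$i)" by (rule diag_bounds(1)[OF m0 dl du])
    also have "\<dots> \<le> norm (X *v v) + norm (E *v v)"
      using norm_triangle_ineq4[of "X *v v" "E *v v"] split[of v] by simp
    finally show ?thesis using Ebound[of v] by (simp add: c_def algebra_simps)
  qed
  have upper: "norm (X *v v) \<le> (1 + k/N) * norm v" for v
  proof -
    have "norm (X *v v) \<le> norm (\<chi> i. d$i * v$i) + norm (E *v v)"
      using split[of v] norm_triangle_ineq by simp
    also have "\<dots> \<le> norm v + (k/N) * norm v"
      using diag_bounds(2)[OF m0 dl du, of v] Ebound[of v] by linarith
    finally show ?thesis by (simp add: algebra_simps)
  qed
  have inj: "inj ((*v) X)"
  proof (rule injI)
    fix x y assume "X *v x = X *v y"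
    then have "X *v (x - y) = 0" by (simp add: matrix_vector_mult_diff_distrib)
    then have "c * norm (x - y) \<le> 0" using lower[of "x - y"] by simp
    then have "norm (x - y) = 0" using cpos
      by (metis mult_pos_pos norm_ge_zero not_le order_antisym_conv zero_less_norm_iff)
    then show "x = y" by simp
  qed
  have inv: "invertible X"
    using inj by (simp add: invertible_left_inverse matrix_left_invertible_injective)
  then have XI: "X ** matrix_inv X = mat 1"
    unfolding invertible_def matrix_inv_def by (rule someI_ex[THEN conjunct1])
  have s1: "spec_norm X \<le> 1 + k/N"
    unfolding spec_norm_def by (rule onorm_le) (rule upper)
  have s2: "spec_norm (matrix_inv X) \<le> 1 / c"
    unfolding spec_norm_def
  proof (rule onorm_le)
    fix y
    have "X *v (matrix_inv X *v y) = y" by (simp add: matrix_vector_mul_assoc XI)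
    then have "c * norm (matrix_inv X *v y) \<le> norm y" using lower[of "matrix_inv X *v y"] by simp
    then show "norm (matrix_inv X *v y) \<le> 1 / c * norm y" using cpos by (simp add: field_simps)
  qed
  have s20: "0 \<le> spec_norm (matrix_inv X)"
    unfolding spec_norm_def by (rule onorm_pos_le) simp
  have "cond_num X \<le> (1 + k/N) * (1 / c)"
    unfolding cond_num_def
    using mult_mono[OF s1 s2] s20 kpos N1 by simp
  also have "\<dots> \<le> (N^3 + 3*k*N^2 + k^2) / (N^3 - 3*k*N^2 - 3*k^2)"
  proof -
    have ceq: "c = (N^3 - k*N^2 - k^2) / N^3" using N1
      by (simp add: c_def m_def field_simps power2_eq_square power3_eq_cube)
    have l: "(1 + k/N) * (1/c) = (N^3 + k*N^2) / (N^3 - k*N^2 - k^2)"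
    proof -
      have D: "N^3 - k*N^2 - k^2 \<noteq> 0" using cond' kN kk by linarith
      have "(1 + k/N) * (1/c) = (1 + k/N) * N^3 / (N^3 - k*N^2 - k^2)" unfolding ceq by simp
      also have "(1 + k/N) * N^3 = N^3 + k*N^2" using N1 by (simp add: field_simps power2_eq_square power3_eq_cube)
      finally show ?thesis .
    qed
    define a where "a = N^3" define b where "b = k*N^2" define e where "e = k^2"
    have b0: "b > 0" and e0: "e > 0" using kpos N1 by (auto simp: b_def e_def)
    have ac: "a - 3*b - 3*e > 0" using cond' by (simp add: a_def b_def e_def)
    have d2: "a - b - e > 0" using ac b0 e0 by linarith
    have p1: "(a-3*b-3*e)*b > 0" "(a-3*b-3*e)*e > 0" using ac b0 e0 by auto
    have p2: "b*e > 0" "e*e > 0" "b*b > 0" using b0 e0 by auto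
    have ex: "(a+3*b+e)*(a-b-e) - (a+b)*(a-3*b-3*e) = 4*((a-3*b-3*e)*b) + 3*((a-3*b-3*e)*e) + 20*(b*e) + 12*(b*b) + 8*(e*e)"
      by (simp add: algebra_simps)
    have key: "(a+b)*(a-3*b-3*e) \<le> (a+3*b+e)*(a-b-e)"
      using ex p1 p2 by linarith
    have "(a+b)/(a-b-e) \<le> (a+3*b+e)/(a-3*b-3*e)"
      using key ac d2 by (simp add: divide_simps mult.commute)
    then show ?thesis using l by (simp add: a_def b_def e_def mult.assoc)
  qed
  finally show ?thesis using inv by (simp add: N_def)
qed

end
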